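(* Let $n \ge 1$ and let $\vec x_{1,\text{pred}},\dots,\vec x_{n,\text{pred}} \in \mathbb{R}^3$ and $\vec x_{1,\text{gt}},\dots,\vec x_{n,\text{gt}} \in \mathbb{R}^3$ be two ordered families of points (predicted and ground-truth atom positions). Define $$\text{PM}_{\text{atom}}^2 = \frac{1}{n^2}\sum_{i=1}^{n}\sum_{j=1}^{n}\Big(\lVert \vec x_{i,\text{pred}}-\vec x_{j,\text{pred}}\rVert - \lVert \vec x_{i,\text{gt}}-\vec x_{j,\text{gt}}\rVert\Big)^2,\qquad \text{RMSD}_{\text{atom}}^2 = \frac{1}{n}\sum_{i=1}^{n}\lVert \vec x_{i,\text{pred}}-\vec x_{i,\text{gt}}\rVert^2,$$ where $\lVert\cdot\rVert$ is the Euclidean norm. Then $\text{PM}_{\text{atom}}^2 \le 2\,\text{RMSD}_{\text{atom}}^2$. *)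

theory Defs
  imports "HOL-Analysis.Analysis"
begin

definition PM_atom_sq :: "nat \<Rightarrow> (nat \<Rightarrow> real^3) \<Rightarrow> (nat \<Rightarrow> real^3) \<Rightarrow> real" where
  "PM_atom_sq n xp xg =
     (1 / (real n)^2) * (\<Sum>i=1..n. \<Sum>j=1..n. (norm (xp i - xp j) - norm (xg i - xg j))^2)"

definition RMSD_atom_sq :: "nat \<Rightarrow> (nat \<Rightarrow> real^3) \<Rightarrow> (nat \<Rightarrow> real^3) \<Rightarrow> real" where
  "RMSD_atom_sq n xp xg = (1 / real n) * (\<Sum>i=1..n. (norm (xp i - xg i))^2)"

end

theory Submission
  imports Defs
begin

theorem theorem1:
  fixes n :: nat and xp xg :: "nat \<Rightarrow> real^3"
  assumes "n \<ge> 1"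
  shows "PM_atom_sq n xp xg \<le> 2 * RMSD_atom_sq n xp xg"
proof -
  define e where "e i = xp i - xg i" for i
  define I where "I = {1..n}"
  define S where "S = (\<Sum>i\<in>I. (norm (e i))^2)"
  have trm: "(norm (xp i - xp j) - norm (xg i - xg j))^2 \<le> (norm (e i - e j))^2" for i j
  proof -
    have "\<bar>norm (xp i - xp j) - norm (xg i - xg j)\<bar> \<le> norm ((xp i - xp j) - (xg i - xg j))"
      by (rule norm_triangle_ineq3)
    also have "(xp i - xp j) - (xg i - xg j) = e i - e j" by (simp add: e_def algebra_simps)
    finally show ?thesis by (metis abs_ge_self abs_le_square_iff order_trans power2_abs)
  qed
  have sq: "(norm (e i - e j))^2 = (norm (e i))^2 + (norm (e j))^2 - 2 * inner (e i) (e j)" for i j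
    by (simp add: power2_norm_eq_inner inner_diff algebra_simps inner_commute)
  have card: "card I = n" by (simp add: I_def)
  have "(\<Sum>i\<in>I. \<Sum>j\<in>I. (norm (e i - e j))^2)
      = (\<Sum>i\<in>I. \<Sum>j\<in>I. (norm (e i))^2 + (norm (e j))^2 - 2 * inner (e i) (e j))"
    by (simp add: sq)
  also have "\<dots> = (\<Sum>i\<in>I. \<Sum>j\<in>I. (norm (e i))^2) + (\<Sum>i\<in>I. \<Sum>j\<in>I. (norm (e j))^2)
      - 2 * (\<Sum>i\<in>I. \<Sum>j\<in>I. inner (e i) (e j))"
    by (simp add: sum.distrib sum_subtractf sum_distrib_left)
  also have "(\<Sum>i\<in>I. \<Sum>j\<in>I. (norm (e i))^2) = real n * S"
    by (simp add: card S_def sum_distrib_left)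
  also have "(\<Sum>i\<in>I. \<Sum>j\<in>I. (norm (e j))^2) = real n * S"
    by (simp add: card S_def)
  also have "(\<Sum>i\<in>I. \<Sum>j\<in>I. inner (e i) (e j)) = inner (sum e I) (sum e I)"
    by (simp add: inner_sum_left inner_sum_right sum.swap[of "\<lambda>i j. inner (e i) (e j)"])
  also have "real n * S + real n * S - 2 * inner (sum e I) (sum e I) = 2 * real n * S - 2 * inner (sum e I) (sum e I)"
    by simp
  also have "\<dots> \<le> 2 * real n * S" by simp
  finally have A: "(\<Sum>i\<in>I. \<Sum>j\<in>I. (norm (e i - e j))^2) \<le> 2 * real n * S" .
  have B: "(\<Sum>i\<in>I. \<Sum>j\<in>I. (norm (xp i - xp j) - norm (xg i - xg j))^2) \<le> 2 * real n * S"
  proof -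
    have "(\<Sum>i\<in>I. \<Sum>j\<in>I. (norm (xp i - xp j) - norm (xg i - xg j))^2) \<le> (\<Sum>i\<in>I. \<Sum>j\<in>I. (norm (e i - e j))^2)"
      by (intro sum_mono trm)
    then show ?thesis using A by linarith
  qed
  have np: "real n > 0" using assms by simp
  have "PM_atom_sq n xp xg \<le> (1 / (real n)^2) * (2 * real n * S)"
    unfolding PM_atom_sq_def I_def[symmetric] using B np by (simp add: divide_right_mono)
  also have "\<dots> = 2 * RMSD_atom_sq n xp xg"
    using np by (simp add: RMSD_atom_sq_def S_def I_def e_def power2_eq_square)
  finally show ?thesis .
qed

end
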